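(* Let $M$ and $M'$ be as described in the context, with initial-state distribution $\rho$ and horizon $T$. If $\pi'_*$ is an optimal policy on $M'$, i.e. $V'_{\pi'_*}(\rho)\ge V'_{\pi'}(\rho)$ for every policy $\pi'$ on $M'$, then $\phi(\pi'_* )$ is an optimal policy on $M$, i.e. $V_{\phi(\pi'_* )}(\rho)\ge V_{\pi}(\rho)$ for every policy $\pi$ on $M$.
   Context: Fix integers $n\ge 1$ (agents/radars), $m\ge 1$ (targets), a horizon $T\ge 1$, and write $[m]=\{1,\dots,m\}$ and $\dagger$ for an extra "stop" symbol not in $[m]$. Let $S$ be a finite state space, $\rho$ a probability distribution on $S$, $\Omega_1,\dots,\Omega_n$ finite individual observation sets, $O(\omega\mid s)$ a probability distribution on $\Omega_1\times\dots\times\Omega_n$ for each $s\in S$, $P(s,\varepsilon,\cdot)$ a probability distribution on $S$ for each $s\in S$ and joint action $\varepsilon=(\varepsilon_1,\dots,\varepsilon_n)\in\mathcal P([m])^n$, and $R:S\times\mathcal P([m])^n\times S\to\mathbb R$ a reward function. The original Dec-POMDP $M$: agent $j$'s action is a subset $\varepsilon_j\subseteq[m]$. A policy on $M$ is $\pi=(\pi_1,\dots,\pi_n)$ with each $\pi_j(\cdot\mid\omega_j)$ a probability distribution on $\mathcal P([m])$ for each $\omega_j\in\Omega_j$. Dynamics: $s_0\sim\rho$; at each step $t=0,\dots,T-1$, $\omega_t=(\omega_{t,1},\dots,\omega_{t,n})\sim O(\cdot\mid s_t)$, each agent independently draws $\varepsilon_{t,j}\sim\pi_j(\cdot\mid\omega_{t,j})$,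 then $s_{t+1}\sim P(s_t,\varepsilon_t,\cdot)$ and reward $R(s_t,\varepsilon_t,s_{t+1})$ is received. $V_\pi(\rho)=\mathbb E\big[\sum_{t=0}^{T-1}R(s_t,\varepsilon_t,s_{t+1})\big]$. The sequential-choice Dec-POMDP $M'$: a policy on $M'$ is $\pi'=(\pi'_1,\dots,\pi'_n)$ where, for each $\omega_j\in\Omega_j$ and $E\subseteq[m]$, $\pi'_j(\cdot\mid\omega_j,E)$ is a probability distribution on $([m]\setminus E)\cup\{\dagger\}$. Dynamics: $s_0\sim\rho$; each round $t=0,\dots,T-1$: an observation $\omega_t\sim O(\cdot\mid s_t)$ is drawn and stays fixed during the round; all selections $\varepsilon_j$ start at $\varnothing$ and no agent is finished. At each micro-step every unfinished agent $j$ independently draws $a_j\sim\pi'_j(\cdot\mid\omega_{t,j},\varepsilon_j)$; if $a_j\in[m]$ then $\varepsilon_j\leftarrow\varepsilon_j\cup\{a_j\}$, if $a_j=\dagger$ agent $j$ becomes finished; the underlying state does not change and reward $0$ is received. When all agents are finished with selections $\varepsilon=(\varepsilon_1,\dots,\varepsilon_n)$, $s_{t+1}\sim P(s_t,\varepsilon,\cdot)$, reward $R(s_t,\varepsilon,s_{t+1})$ is received, and selections are reset to $\varnothing$. $V'_{\pi'}(\rho)$ is the expected total reward over the $T$ rounds. Policy transposition: for a policy $\pi'$ on $M'$, $\phi(\pi')$ is the policy on $M$ with, for each agent $j$, $\omega\in\Omega_j$ and $\varepsilon\subseteq[m]$ with $|\varepsilon|=p$, \[\phi_j(\pi')(\varepsilon\mid\omega)=\sum_{(i_1,\dots,i_p)}\Big(\prod_{l=0}^{p-1}\pi'_j\big(i_{l+1}\mid\omega,\{i_1,\dots,i_l\}\big)\Big)\,\pi'_j(\dagger\mid\omega,\varepsilon),\]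 where the sum ranges over all $p!$ orderings $(i_1,\dots,i_p)$ of the elements of $\varepsilon$ (for $\varepsilon=\varnothing$ this is $\pi'_j(\dagger\mid\omega,\varnothing)$). *)

theory Defs
  imports "HOL-Probability.Probability"
begin

text \<open>Agents are 1..n, targets are 1..m. Joint observations and joint actions are
functions on nat; only agents in {1..n} matter.  Joint actions are normalised to
the empty selection outside {1..n}. The stop symbol is None (targets are Some i).\<close>

definition valid_M_policy ::
  "nat \<Rightarrow> nat \<Rightarrow> (nat \<Rightarrow> 'o \<Rightarrow> nat set pmf) \<Rightarrow> bool" where
  "valid_M_policy n m \<pi> \<longleftrightarrow>
     (\<forall>j\<in>{1..n}. \<forall>\<omega>. set_pmf (\<pi> j \<omega>) \<subseteq> Pow {1..m})"

definition valid_M'_policy ::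
  "nat \<Rightarrow> nat \<Rightarrow> (nat \<Rightarrow> 'o \<Rightarrow> nat set \<Rightarrow> nat option pmf) \<Rightarrow> bool" where
  "valid_M'_policy n m \<pi>' \<longleftrightarrow>
     (\<forall>j\<in>{1..n}. \<forall>\<omega> E. E \<subseteq> {1..m} \<longrightarrow>
        set_pmf (\<pi>' j \<omega> E) \<subseteq> Some ` ({1..m} - E) \<union> {None})"

definition joint_action ::
  "nat \<Rightarrow> (nat \<Rightarrow> 'o \<Rightarrow> nat set pmf) \<Rightarrow> (nat \<Rightarrow> 'o) \<Rightarrow> (nat \<Rightarrow> nat set) pmf" where
  "joint_action n \<pi> \<omega> = Pi_pmf {1..n} {} (\<lambda>j. \<pi> j (\<omega> j))"

fun val_M ::
  "nat \<Rightarrow> ('s \<Rightarrow> (nat \<Rightarrow> 'o) pmf) \<Rightarrow> ('s \<Rightarrow> (nat \<Rightarrow> nat set) \<Rightarrow> 's pmf)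
   \<Rightarrow> ('s \<Rightarrow> (nat \<Rightarrow> nat set) \<Rightarrow> 's \<Rightarrow> real) \<Rightarrow> (nat \<Rightarrow> 'o \<Rightarrow> nat set pmf)
   \<Rightarrow> nat \<Rightarrow> 's \<Rightarrow> real" where
  "val_M n Obs P R \<pi> 0 s = 0"
| "val_M n Obs P R \<pi> (Suc t) s =
     measure_pmf.expectation (Obs s) (\<lambda>\<omega>.
       measure_pmf.expectation (joint_action n \<pi> \<omega>) (\<lambda>\<epsilon>.
         measure_pmf.expectation (P s \<epsilon>) (\<lambda>s'. R s \<epsilon> s' + val_M n Obs P R \<pi> t s')))"

definition V_M ::
  "nat \<Rightarrow> ('s \<Rightarrow> (nat \<Rightarrow> 'o) pmf) \<Rightarrow> ('s \<Rightarrow> (nat \<Rightarrow> nat set) \<Rightarrow> 's pmf)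
   \<Rightarrow> ('s \<Rightarrow> (nat \<Rightarrow> nat set) \<Rightarrow> 's \<Rightarrow> real) \<Rightarrow> nat \<Rightarrow> (nat \<Rightarrow> 'o \<Rightarrow> nat set pmf)
   \<Rightarrow> 's pmf \<Rightarrow> real" where
  "V_M n Obs P R T \<pi> \<rho> = measure_pmf.expectation \<rho> (val_M n Obs P R \<pi> T)"

text \<open>Sequential-choice Dec-POMDP M'. A configuration maps each agent to
(current selection, finished flag).  One micro-step: every unfinished agent draws
independently; finished agents stay put.\<close>
definition micro_agent ::
  "(nat \<Rightarrow> 'o \<Rightarrow> nat set \<Rightarrow> nat option pmf) \<Rightarrow> nat \<Rightarrow> 'o \<Rightarrow> nat set \<times> bool
   \<Rightarrow> (nat set \<times> bool) pmf" where
  "micro_agent \<pi>' j \<omega> c =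
     (if snd c then return_pmf (fst c, True)
      else map_pmf (\<lambda>a. case a of None \<Rightarrow> (fst c, True) | Some i \<Rightarrow> (insert i (fst c), False))
             (\<pi>' j \<omega> (fst c)))"

definition micro_step ::
  "nat \<Rightarrow> (nat \<Rightarrow> 'o \<Rightarrow> nat set \<Rightarrow> nat option pmf) \<Rightarrow> (nat \<Rightarrow> 'o)
   \<Rightarrow> (nat \<Rightarrow> nat set \<times> bool) \<Rightarrow> (nat \<Rightarrow> nat set \<times> bool) pmf" where
  "micro_step n \<pi>' \<omega> c = Pi_pmf {1..n} ({}, True) (\<lambda>j. micro_agent \<pi>' j (\<omega> j) (c j))"

definition init_cfg :: "nat \<Rightarrow> nat \<Rightarrow> nat set \<times> bool" where
  "init_cfg n = (\<lambda>j. ({}, j \<notin> {1..n}))"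

text \<open>Each agent makes at most m+1 micro-steps (each non-stop draw adds a new
target from {1..m}); after all agents are finished the micro-step is the identity,
so running m+1 micro-steps yields the distribution of the final selections.\<close>
definition round_sel ::
  "nat \<Rightarrow> nat \<Rightarrow> (nat \<Rightarrow> 'o \<Rightarrow> nat set \<Rightarrow> nat option pmf) \<Rightarrow> (nat \<Rightarrow> 'o)
   \<Rightarrow> (nat \<Rightarrow> nat set) pmf" where
  "round_sel n m \<pi>' \<omega> =
     map_pmf (\<lambda>c j. fst (c j))
       (((\<lambda>p. bind_pmf p (micro_step n \<pi>' \<omega>)) ^^ (m + 1)) (return_pmf (init_cfg n)))"

fun val_M' ::
  "nat \<Rightarrow> nat \<Rightarrow> ('s \<Rightarrow> (nat \<Rightarrow> 'o) pmf) \<Rightarrow> ('s \<Rightarrow> (nat \<Rightarrow> nat set) \<Rightarrow> 's pmf)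
   \<Rightarrow> ('s \<Rightarrow> (nat \<Rightarrow> nat set) \<Rightarrow> 's \<Rightarrow> real) \<Rightarrow> (nat \<Rightarrow> 'o \<Rightarrow> nat set \<Rightarrow> nat option pmf)
   \<Rightarrow> nat \<Rightarrow> 's \<Rightarrow> real" where
  "val_M' n m Obs P R \<pi>' 0 s = 0"
| "val_M' n m Obs P R \<pi>' (Suc t) s =
     measure_pmf.expectation (Obs s) (\<lambda>\<omega>.
       measure_pmf.expectation (round_sel n m \<pi>' \<omega>) (\<lambda>\<epsilon>.
         measure_pmf.expectation (P s \<epsilon>) (\<lambda>s'. R s \<epsilon> s' + val_M' n m Obs P R \<pi>' t s')))"

definition V_M' ::
  "nat \<Rightarrow> nat \<Rightarrow> ('s \<Rightarrow> (nat \<Rightarrow> 'o) pmf) \<Rightarrow> ('s \<Rightarrow> (nat \<Rightarrow> nat set) \<Rightarrow> 's pmf)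
   \<Rightarrow> ('s \<Rightarrow> (nat \<Rightarrow> nat set) \<Rightarrow> 's \<Rightarrow> real) \<Rightarrow> nat
   \<Rightarrow> (nat \<Rightarrow> 'o \<Rightarrow> nat set \<Rightarrow> nat option pmf) \<Rightarrow> 's pmf \<Rightarrow> real" where
  "V_M' n m Obs P R T \<pi>' \<rho> = measure_pmf.expectation \<rho> (val_M' n m Obs P R \<pi>' T)"

definition phi_val ::
  "(nat \<Rightarrow> 'o \<Rightarrow> nat set \<Rightarrow> nat option pmf) \<Rightarrow> nat \<Rightarrow> 'o \<Rightarrow> nat set \<Rightarrow> real" where
  "phi_val \<pi>' j \<omega> \<epsilon> =
     (\<Sum>xs\<in>{xs. distinct xs \<and> set xs = \<epsilon>}.
        \<Prod>l<length xs. pmf (\<pi>' j \<omega> (set (take l xs))) (Some (xs ! l)))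
     * pmf (\<pi>' j \<omega> \<epsilon>) None"

definition phi ::
  "(nat \<Rightarrow> 'o \<Rightarrow> nat set \<Rightarrow> nat option pmf) \<Rightarrow> nat \<Rightarrow> 'o \<Rightarrow> nat set pmf" where
  "phi \<pi>' j \<omega> = embed_pmf (phi_val \<pi>' j \<omega>)"

end

theory Submission
  imports Defs "HOL-Combinatorics.Multiset_Permutations"
begin


lemma iter_bind:
  fixes K :: "'a \<Rightarrow> 'a pmf"
  shows   "((\<lambda>p. bind_pmf p K)^^k) p = bind_pmf p (\<lambda>c. ((\<lambda>p. bind_pmf p K)^^k) (return_pmf c))"
proof (induction k arbitrary: p)
  case 0 then show ?case by (simp add: bind_return_pmf')
next
  case (Suc k)
  have "((\<lambda>p. bind_pmf p K)^^Suc k) p = bind_pmf (((\<lambda>p. bind_pmf p K)^^k) p) K" by simp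
  also have "\<dots> = bind_pmf p (\<lambda>c. bind_pmf (((\<lambda>p. bind_pmf p K)^^k) (return_pmf c)) K)"
    by (subst Suc) (simp add: bind_assoc_pmf)
  finally show ?case by simp
qed

lemma iter_Suc:
  fixes K :: "'a \<Rightarrow> 'a pmf"
  shows   "((\<lambda>p. bind_pmf p K)^^Suc k) (return_pmf c) = bind_pmf (K c) (\<lambda>d. ((\<lambda>p. bind_pmf p K)^^k) (return_pmf d))"
  by (simp only: funpow_Suc_right o_def bind_return_pmf iter_bind[where K=K and k=k and p="K c"])

lemma iter_Pi:
  fixes Kj :: "nat \<Rightarrow> 'c \<Rightarrow> 'c pmf"
  assumes "finite I" "\<forall>j. j \<notin> I \<longrightarrow> c0 j = d"
  shows "((\<lambda>p. bind_pmf p (\<lambda>c. Pi_pmf I d (\<lambda>j. Kj j (c j))))^^k) (return_pmf c0)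
       = Pi_pmf I d (\<lambda>j. ((\<lambda>p. bind_pmf p (Kj j))^^k) (return_pmf (c0 j)))"
proof (induction k)
  case 0
  have "(\<lambda>x. if x \<in> I then c0 x else d) = c0" using assms(2) by auto
  then show ?case using assms(1) by simp
next
  case (Suc k)
  have "((\<lambda>p. bind_pmf p (\<lambda>c. Pi_pmf I d (\<lambda>j. Kj j (c j))))^^Suc k) (return_pmf c0)
     = bind_pmf (((\<lambda>p. bind_pmf p (\<lambda>c. Pi_pmf I d (\<lambda>j. Kj j (c j))))^^k) (return_pmf c0))
          (\<lambda>c. Pi_pmf I d (\<lambda>j. Kj j (c j)))" by simp
  also have "\<dots> = bind_pmf (Pi_pmf I d (\<lambda>j. ((\<lambda>p. bind_pmf p (Kj j))^^k) (return_pmf (c0 j))))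
          (\<lambda>c. Pi_pmf I d (\<lambda>j. Kj j (c j)))" by (simp only: Suc)
  also have "\<dots> = Pi_pmf I d (\<lambda>j. bind_pmf (((\<lambda>p. bind_pmf p (Kj j))^^k) (return_pmf (c0 j))) (Kj j))"
    by (rule Pi_pmf_bind[symmetric, OF assms(1)])
  also have "\<dots> = Pi_pmf I d (\<lambda>j. ((\<lambda>p. bind_pmf p (Kj j))^^Suc k) (return_pmf (c0 j)))" by simp
  finally show ?case .
qed

definition agent_step :: "(nat set \<Rightarrow> nat option pmf) \<Rightarrow> nat set \<times> bool \<Rightarrow> (nat set \<times> bool) pmf" where
  "agent_step q c = (if snd c then return_pmf (fst c, True)
      else map_pmf (\<lambda>a. case a of None \<Rightarrow> (fst c, True) | Some i \<Rightarrow> (insert i (fst c), False)) (q (fst c)))"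

lemma micro_agent_eq: "micro_agent \<pi>' j \<omega> = agent_step (\<pi>' j \<omega>)"
  by (rule ext) (simp add: micro_agent_def agent_step_def)

definition Ag :: "(nat set \<Rightarrow> nat option pmf) \<Rightarrow> nat \<Rightarrow> nat set \<times> bool \<Rightarrow> (nat set \<times> bool) pmf" where
  "Ag q k c = ((\<lambda>p. bind_pmf p (agent_step q))^^k) (return_pmf c)"

lemma Ag_0: "Ag q 0 c = return_pmf c" by (simp add: Ag_def)

lemma Ag_Suc: "Ag q (Suc k) c = bind_pmf (agent_step q c) (Ag q k)"
  unfolding Ag_def by (rule iter_Suc)

lemma Ag_True: "Ag q k (E, True) = return_pmf (E, True)"
  by (induction k) (simp_all add: Ag_0 Ag_Suc agent_step_def bind_return_pmf)

lemma Ag_Suc_False: "Ag q (Suc k) (E, False) = bind_pmf (q E)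
   (\<lambda>a. Ag q k (case a of None \<Rightarrow> (E, True) | Some i \<Rightarrow> (insert i E, False)))"
  by (simp add: Ag_Suc agent_step_def bind_map_pmf o_def)

lemma round_sel_eq:
  "round_sel n m \<pi>' \<omega> = Pi_pmf {1..n} {} (\<lambda>j. map_pmf fst (Ag (\<pi>' j (\<omega> j)) (m+1) ({}, False)))"
proof -
  have "((\<lambda>p. bind_pmf p (micro_step n \<pi>' \<omega>)) ^^ (m + 1)) (return_pmf (init_cfg n))
     = Pi_pmf {1..n} ({}, True) (\<lambda>j. Ag (\<pi>' j (\<omega> j)) (m+1) (init_cfg n j))"
    unfolding micro_step_def micro_agent_eq Ag_def
    by (rule iter_Pi) (auto simp: init_cfg_def)
  also have "\<dots> = Pi_pmf {1..n} ({}, True) (\<lambda>j. Ag (\<pi>' j (\<omega> j)) (m+1) ({}, False))"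
    by (rule Pi_pmf_cong) (auto simp: init_cfg_def)
  finally have 1: "((\<lambda>p. bind_pmf p (micro_step n \<pi>' \<omega>)) ^^ (m + 1)) (return_pmf (init_cfg n))
     = Pi_pmf {1..n} ({}, True) (\<lambda>j. Ag (\<pi>' j (\<omega> j)) (m+1) ({}, False))" .
  have 2: "(\<lambda>c j. fst (c j)) = (\<lambda>h. fst \<circ> h)" by (auto simp: fun_eq_iff)
  show ?thesis unfolding round_sel_def 1 2
    by (rule Pi_pmf_map[symmetric]) auto
qed

definition validq :: "nat \<Rightarrow> (nat set \<Rightarrow> nat option pmf) \<Rightarrow> bool" where
  "validq m q \<longleftrightarrow> (\<forall>E. E \<subseteq> {1..m} \<longrightarrow> set_pmf (q E) \<subseteq> Some ` ({1..m} - E) \<union> {None})"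

lemma Ag_support:
  assumes "validq m q" "E \<subseteq> {1..m}"
  shows "set_pmf (Ag q k (E, b)) \<subseteq> {c. fst c \<subseteq> {1..m}}"
  using assms(2)
proof (induction k arbitrary: E b)
  case 0 then show ?case by (simp add: Ag_0)
next
  case (Suc k)
  show ?case
  proof (cases b)
    case True then show ?thesis using Suc.prems by (simp add: Ag_True)
  next
    case False
    have "set_pmf (Ag q k (case a of None \<Rightarrow> (E, True) | Some i \<Rightarrow> (insert i E, False)))
        \<subseteq> {c. fst c \<subseteq> {1..m}}" if "a \<in> set_pmf (q E)" for a
    proof -
      have a: "a \<in> Some ` ({1..m} - E) \<union> {None}" using assms(1) Suc.prems that unfolding validq_def by blast
      show ?thesis
      proof (cases a)
        case None then show ?thesis using Suc.prems by (simp add: Ag_True)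
      next
        case (Some i)
        then have "insert i E \<subseteq> {1..m}" using a Suc.prems by auto
        then show ?thesis using Suc.IH Some by auto
      qed
    qed
    then show ?thesis using False by (auto simp: Ag_Suc_False)
  qed
qed

definition Wsum :: "(nat set \<Rightarrow> nat option pmf) \<Rightarrow> nat set \<Rightarrow> nat set \<Rightarrow> real" where
  "Wsum q E \<epsilon> = (\<Sum>xs\<in>permutations_of_set (\<epsilon> - E).
      \<Prod>l<length xs. pmf (q (E \<union> set (take l xs))) (Some (xs ! l)))"

lemma Wsum_self: "Wsum q E E = 1"
  by (simp add: Wsum_def)

lemma Wsum_rec:
  assumes "E \<subseteq> \<epsilon>" "E \<noteq> \<epsilon>"
  shows "Wsum q E \<epsilon> = (\<Sum>i\<in>\<epsilon> - E. pmf (q E) (Some i) * Wsum q (insert i E) \<epsilon>)"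
proof (cases "finite (\<epsilon> - E)")
  case False
  then show ?thesis by (simp add: Wsum_def permutations_of_set_infinite)
next
  case fin: True
  define f where "f xs = (\<Prod>l<length xs. pmf (q (E \<union> set (take l xs))) (Some (xs ! l)))" for xs
  have ne: "\<epsilon> - E \<noteq> {}" using assms by auto
  have "Wsum q E \<epsilon> = sum f (\<Union>i\<in>\<epsilon> - E. (\<lambda>xs. i # xs) ` permutations_of_set (\<epsilon> - E - {i}))"
    unfolding Wsum_def f_def by (subst permutations_of_set_nonempty[OF ne]) simp
  also have "\<dots> = (\<Sum>i\<in>\<epsilon> - E. sum f ((\<lambda>xs. i # xs) ` permutations_of_set (\<epsilon> - E - {i})))"
    by (rule sum.UNION_disjoint) (use fin in auto)
  also have "\<dots> = (\<Sum>i\<in>\<epsilon> - E. \<Sum>ys\<in>permutations_of_set (\<epsilon> - E - {i}). f (i # ys))"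
    by (rule sum.cong[OF refl], subst sum.reindex) (auto simp: inj_on_def)
  also have "\<dots> = (\<Sum>i\<in>\<epsilon> - E. pmf (q E) (Some i) * Wsum q (insert i E) \<epsilon>)"
  proof (rule sum.cong[OF refl])
    fix i assume "i \<in> \<epsilon> - E"
    have eq: "\<epsilon> - insert i E = \<epsilon> - E - {i}" by auto
    have "f (i # ys) = pmf (q E) (Some i) *
        (\<Prod>l<length ys. pmf (q (insert i E \<union> set (take l ys))) (Some (ys ! l)))" for ys
      unfolding f_def by (simp add: prod.lessThan_Suc_shift del: prod.lessThan_Suc)
    then show "(\<Sum>ys\<in>permutations_of_set (\<epsilon> - E - {i}). f (i # ys)) = pmf (q E) (Some i) * Wsum q (insert i E) \<epsilon>"
      unfolding Wsum_def eq by (simp add: sum_distrib_left)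
  qed
  finally show ?thesis .
qed

lemma Ag_pmf:
  assumes v: "validq m q" and "E \<subseteq> {1..m}" "m + 1 \<le> card E + k"
  shows "pmf (map_pmf fst (Ag q k (E, False))) \<epsilon> = (if E \<subseteq> \<epsilon> then Wsum q E \<epsilon> * pmf (q \<epsilon>) None else 0)"
  using assms(2,3)
proof (induction k arbitrary: E)
  case 0
  have "card E \<le> card {1..m}" by (rule card_mono) (use 0 in auto)
  then show ?case using 0 by simp
next
  case (Suc k)
  have finE: "finite E" using Suc.prems(1) finite_subset by blast
  define g where "g a = (case a of None \<Rightarrow> (E, True) | Some i \<Rightarrow> (insert i E, False))" for a
  define F where "F a = pmf (map_pmf fst (Ag q k (g a))) \<epsilon>" for a
  define c where "c = pmf (q \<epsilon>) None"
  have supp: "set_pmf (q E) \<subseteq> Some ` ({1..m} - E) \<union> {None}" using v Suc.prems(1) unfolding validq_def by blast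
  have "pmf (map_pmf fst (Ag q (Suc k) (E, False))) \<epsilon> = (\<integral>a. F a \<partial>measure_pmf (q E))"
    by (simp add: Ag_Suc_False map_bind_pmf pmf_bind F_def g_def)
  also have "\<dots> = (\<Sum>a\<in>insert None (Some ` ({1..m} - E)). pmf (q E) a *\<^sub>R F a)"
    by (rule integral_measure_pmf) (use supp in auto)
  also have "\<dots> = pmf (q E) None * F None + (\<Sum>i\<in>{1..m} - E. pmf (q E) (Some i) * F (Some i))"
    by (simp add: sum.reindex)
  finally have eq1: "pmf (map_pmf fst (Ag q (Suc k) (E, False))) \<epsilon> =
     pmf (q E) None * F None + (\<Sum>i\<in>{1..m} - E. pmf (q E) (Some i) * F (Some i))" .
  have FN: "F None = (if \<epsilon> = E then 1 else 0)"
    by (simp add: F_def g_def Ag_True)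
  have FS: "F (Some i) = (if insert i E \<subseteq> \<epsilon> then Wsum q (insert i E) \<epsilon> * c else 0)"
    if "i \<in> {1..m} - E" for i
  proof -
    have "insert i E \<subseteq> {1..m}" using that Suc.prems by auto
    moreover have "m + 1 \<le> card (insert i E) + k" using that Suc.prems finE by simp
    ultimately show ?thesis unfolding F_def g_def c_def using Suc.IH by simp
  qed
  show ?case
  proof (cases "E \<subseteq> \<epsilon>")
    case False
    then have "F None = 0" using FN by auto
    moreover have "(\<Sum>i\<in>{1..m} - E. pmf (q E) (Some i) * F (Some i)) = 0"
      by (rule sum.neutral) (use False FS in auto)
    ultimately show ?thesis using eq1 False by simp
  next
    case sub: True
    show ?thesis
    proof (cases "E = \<epsilon>")
      case True
      have "(\<Sum>i\<in>{1..m} - E. pmf (q E) (Some i) * F (Some i)) = 0"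
        by (rule sum.neutral) (use True FS in auto)
      then show ?thesis using eq1 True FN by (simp add: Wsum_self)
    next
      case ne: False
      have z: "(\<Sum>i\<in>{1..m} - E. pmf (q E) (Some i) * F (Some i))
          = (\<Sum>i\<in>\<epsilon> - E. pmf (q E) (Some i) * Wsum q (insert i E) \<epsilon>) * c"
      proof (cases "finite (\<epsilon> - E)")
        case False
        have "Wsum q (insert i E) \<epsilon> = 0" for i
        proof -
          have "infinite (\<epsilon> - insert i E)" using False
            by (metis Diff_insert finite_Diff_insert)
          then show ?thesis by (simp add: Wsum_def permutations_of_set_infinite)
        qed
        then have "F (Some i) = 0" if "i \<in> {1..m} - E" for i using FS[OF that] by simp
        then show ?thesis using False by simp
      next
        case fin: True
        have "(\<Sum>i\<in>{1..m} - E. pmf (q E) (Some i) * F (Some i))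
            = (\<Sum>i\<in>{1..m} - E. if i \<in> \<epsilon> then pmf (q E) (Some i) * Wsum q (insert i E) \<epsilon> * c else 0)"
          by (rule sum.cong[OF refl]) (use FS sub in auto)
        also have "\<dots> = (\<Sum>i\<in>({1..m} - E) \<inter> \<epsilon>. pmf (q E) (Some i) * Wsum q (insert i E) \<epsilon> * c)"
          by (rule sum.inter_restrict[symmetric]) simp
        also have "\<dots> = (\<Sum>i\<in>\<epsilon> - E. pmf (q E) (Some i) * Wsum q (insert i E) \<epsilon> * c)"
        proof (rule sum.mono_neutral_left[OF fin])
          show "({1..m} - E) \<inter> \<epsilon> \<subseteq> \<epsilon> - E" by auto
          show "\<forall>i\<in>\<epsilon> - E - ({1..m} - E) \<inter> \<epsilon>. pmf (q E) (Some i) * Wsum q (insert i E) \<epsilon> * c = 0"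
          proof
            fix i assume "i \<in> \<epsilon> - E - ({1..m} - E) \<inter> \<epsilon>"
            then have "Some i \<notin> set_pmf (q E)" using supp by auto
            then show "pmf (q E) (Some i) * Wsum q (insert i E) \<epsilon> * c = 0"
              by (simp add: set_pmf_iff)
          qed
        qed
        finally show ?thesis by (simp add: sum_distrib_right)
      qed
      show ?thesis using eq1 FN ne sub z Wsum_rec[OF sub ne, of q] by (simp add: c_def)
    qed
  qed
qed


lemma measure_cond_pmf:
  assumes "set_pmf p \<inter> A \<noteq> {}"
  shows "measure (measure_pmf (cond_pmf p A)) B = measure (measure_pmf p) (A \<inter> B) / measure (measure_pmf p) A"
proof -
  have nz: "emeasure (measure_pmf p) A \<noteq> 0" by (rule emeasure_measure_pmf_not_zero[OF assms])
  have fin: "emeasure (measure_pmf p) A \<noteq> \<infinity>" by simp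
  have B: "B \<in> sets (measure_pmf p)" by simp
  show ?thesis
    unfolding cond_pmf.rep_eq[OF assms] by (rule measure_uniform_measure[OF nz fin B])
qed

lemma cond_cond_pmf:
  assumes "set_pmf p \<inter> A \<inter> B \<noteq> {}"
  shows "cond_pmf (cond_pmf p A) B = cond_pmf p (A \<inter> B)"
proof -
  have a: "set_pmf p \<inter> A \<noteq> {}" using assms by auto
  have b: "set_pmf (cond_pmf p A) \<inter> B \<noteq> {}" using assms a by auto
  have c: "set_pmf p \<inter> (A \<inter> B) \<noteq> {}" using assms by auto
  obtain x0 where "x0 \<in> set_pmf p" "x0 \<in> A" using a by blast
  then have pos: "measure (measure_pmf p) A > 0" by (rule measure_pmf_posI)
  show ?thesis
  proof (rule pmf_eqI)
    fix x
    show "pmf (cond_pmf (cond_pmf p A) B) x = pmf (cond_pmf p (A \<inter> B)) x"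
    proof (cases "x \<in> A \<and> x \<in> B")
      case True
      then show ?thesis using pos by (simp add: pmf_cond[OF b] pmf_cond[OF a] pmf_cond[OF c] measure_cond_pmf[OF a])
    next
      case False
      then show ?thesis by (auto simp add: pmf_cond[OF b] pmf_cond[OF a] pmf_cond[OF c])
    qed
  qed
qed

lemma cond_pmf_cong_supp:
  assumes "set_pmf p \<inter> A \<noteq> {}" "set_pmf p \<inter> A = set_pmf p \<inter> B"
  shows "cond_pmf p A = cond_pmf p B"
proof -
  have b: "set_pmf p \<inter> B \<noteq> {}" using assms by auto
  have m: "measure (measure_pmf p) A = measure (measure_pmf p) B"
    by (metis assms(2) inf_commute measure_Int_set_pmf)
  show ?thesis
  proof (rule pmf_eqI)
    fix x
    show "pmf (cond_pmf p A) x = pmf (cond_pmf p B) x"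
    proof (cases "x \<in> set_pmf p")
      case True
      then have "x \<in> A \<longleftrightarrow> x \<in> B" using assms(2) by blast
      then show ?thesis by (simp add: pmf_cond[OF assms(1)] pmf_cond[OF b] m)
    next
      case False
      then have "pmf p x = 0" by (simp add: set_pmf_iff)
      then show ?thesis by (simp add: pmf_cond[OF assms(1)] pmf_cond[OF b] m)
    qed
  qed
qed

lemma cond_pmf_UNIV: "cond_pmf p UNIV = p"
proof -
  have a: "set_pmf p \<inter> UNIV \<noteq> {}" using set_pmf_not_empty by auto
  show ?thesis by (rule pmf_eqI) (simp add: pmf_cond[OF a])
qed

lemma embed_pmf_pmf_eq: "embed_pmf (pmf p) = p"
proof (rule pmf_eqI)
  fix x
  have "(\<integral>\<^sup>+x. ennreal (pmf p x) \<partial>count_space UNIV) = 1"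
    by (simp add: nn_integral_pmf measure_pmf.emeasure_space_1[simplified])
  then show "pmf (embed_pmf (pmf p)) x = pmf p x"
    by (subst pmf_embed_pmf) auto
qed



definition Cset :: "nat set \<Rightarrow> nat set set" where
  "Cset E = {\<epsilon>. E \<subseteq> \<epsilon> \<and> (\<forall>x\<in>\<epsilon> - E. \<forall>y\<in>E. y < x)}"

definition kap :: "nat set \<Rightarrow> nat set \<Rightarrow> nat option" where
  "kap E \<epsilon> = (if \<epsilon> = E then None else Some (Min (\<epsilon> - E)))"

definition qc :: "nat set pmf \<Rightarrow> nat set \<Rightarrow> nat option pmf" where
  "qc p E = (if set_pmf p \<inter> Cset E = {} then return_pmf None
             else map_pmf (kap E) (cond_pmf p (Cset E)))"

lemma qc_valid:
  assumes "set_pmf p \<subseteq> Pow {1..m}"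
  shows "validq m (qc p)"
  unfolding validq_def
proof (intro allI impI)
  fix E :: "nat set" assume E: "E \<subseteq> {1..m}"
  show "set_pmf (qc p E) \<subseteq> Some ` ({1..m} - E) \<union> {None}"
  proof (cases "set_pmf p \<inter> Cset E = {}")
    case True then show ?thesis by (simp add: qc_def)
  next
    case False
    have *: "kap E \<epsilon> \<in> Some ` ({1..m} - E) \<union> {None}" if "\<epsilon> \<in> set_pmf p" "\<epsilon> \<in> Cset E" for \<epsilon>
    proof (cases "\<epsilon> = E")
      case True then show ?thesis by (simp add: kap_def)
    next
      case ne: False
      have sub: "\<epsilon> \<subseteq> {1..m}" using assms that by auto
      then have fin: "finite (\<epsilon> - E)" using finite_subset by blast
      have "\<epsilon> - E \<noteq> {}" using ne that(2) by (auto simp: Cset_def)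
      then have "Min (\<epsilon> - E) \<in> \<epsilon> - E" using fin by (rule Min_in[rotated])
      then show ?thesis using ne sub by (auto simp: kap_def)
    qed
    have eq: "set_pmf (qc p E) = kap E ` (set_pmf p \<inter> Cset E)"
      using False by (simp add: qc_def set_cond_pmf[OF False])
    show ?thesis unfolding eq image_subset_iff using * by blast
  qed
qed

lemma Cset_step:
  assumes "\<epsilon> \<in> Cset E" "\<epsilon> \<noteq> E" "finite \<epsilon>" "finite y"
  shows "(y \<in> Cset E \<and> kap E y = Some (Min (\<epsilon> - E))) \<longleftrightarrow> y \<in> Cset (insert (Min (\<epsilon> - E)) E)"
proof -
  define i where "i = Min (\<epsilon> - E)"
  have ne: "\<epsilon> - E \<noteq> {}" using assms(1,2) by (auto simp: Cset_def)
  have iin: "i \<in> \<epsilon> - E" unfolding i_def using ne assms(3) by (intro Min_in) auto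
  have igt: "\<forall>z\<in>E. z < i" using iin assms(1) by (auto simp: Cset_def)
  show ?thesis unfolding i_def[symmetric]
  proof
    assume h: "y \<in> Cset E \<and> kap E y = Some i"
    then have yne: "y \<noteq> E" and mi: "Min (y - E) = i" by (auto simp: kap_def split: if_splits)
    have yE: "y - E \<noteq> {}" using yne h by (auto simp: Cset_def)
    have "i \<in> y - E" unfolding mi[symmetric] using yE assms(4) by (intro Min_in) auto
    moreover have "i \<le> x" if "x \<in> y - E" for x unfolding mi[symmetric] using that assms(4) by (intro Min_le) auto
    ultimately show "y \<in> Cset (insert i E)" using h by (force simp: Cset_def)
  next
    assume h: "y \<in> Cset (insert i E)"
    have iE: "i \<notin> E" using iin by auto
    have yC: "y \<in> Cset E" using h igt by (auto simp: Cset_def)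
    have yne: "y \<noteq> E" using h iE by (auto simp: Cset_def)
    have "Min (y - E) = i"
    proof (rule Min_eqI)
      show "finite (y - E)" using assms(4) by auto
      show "i \<in> y - E" using h iE by (auto simp: Cset_def)
      fix x assume x: "x \<in> y - E"
      show "i \<le> x"
      proof (cases "x = i")
        case True then show ?thesis by simp
      next
        case False
        then have "x \<in> y - insert i E" using x by auto
        moreover have "\<forall>x\<in>y - insert i E. \<forall>z\<in>insert i E. z < x" using h by (simp add: Cset_def)
        ultimately have "i < x" by blast
        then show ?thesis by simp
      qed
    qed
    then show "y \<in> Cset E \<and> kap E y = Some i" using yC yne by (simp add: kap_def)
  qed
qed

lemma Ag_cond:
  assumes sp: "set_pmf p \<subseteq> Pow {1..m}"
  shows "E \<subseteq> {1..m} \<Longrightarrow> set_pmf p \<inter> Cset E \<noteq> {} \<Longrightarrow> m + 1 \<le> card E + k \<Longrightarrow>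
     map_pmf fst (Ag (qc p) k (E, False)) = cond_pmf p (Cset E)"
proof (induction k arbitrary: E)
  case 0
  have "card E \<le> card {1..m}" by (rule card_mono) (use 0 in auto)
  then show ?case using 0 by simp
next
  case (Suc k)
  have finE: "finite E" using Suc.prems(1) finite_subset by blast
  define Q where "Q = cond_pmf p (Cset E)"
  have setQ: "set_pmf Q = set_pmf p \<inter> Cset E" unfolding Q_def by (rule set_cond_pmf[OF Suc.prems(2)])
  have "map_pmf fst (Ag (qc p) (Suc k) (E, False)) = bind_pmf Q (\<lambda>\<epsilon>. map_pmf fst (Ag (qc p) k
       (case kap E \<epsilon> of None \<Rightarrow> (E, True) | Some i \<Rightarrow> (insert i E, False))))"
    using Suc.prems(2) by (simp add: Ag_Suc_False qc_def map_bind_pmf bind_map_pmf Q_def)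
  also have "\<dots> = bind_pmf Q (\<lambda>\<epsilon>. cond_pmf Q {y. kap E \<epsilon> = kap E y})"
  proof (rule bind_pmf_cong[OF refl])
    fix \<epsilon> assume "\<epsilon> \<in> set_pmf Q"
    then have \<epsilon>: "\<epsilon> \<in> set_pmf p" "\<epsilon> \<in> Cset E" using setQ by auto
    have finep: "finite \<epsilon>" using \<epsilon>(1) sp finite_subset by blast
    show "map_pmf fst (Ag (qc p) k (case kap E \<epsilon> of None \<Rightarrow> (E, True) | Some i \<Rightarrow> (insert i E, False)))
          = cond_pmf Q {y. kap E \<epsilon> = kap E y}"
    proof (cases "\<epsilon> = E")
      case True
      have ky: "{y. kap E \<epsilon> = kap E y} = {E}" using True by (auto simp: kap_def split: if_splits)
      have ne: "set_pmf Q \<inter> {E} \<noteq> {}" using \<epsilon> True setQ by auto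
      have "set_pmf (cond_pmf Q {E}) \<subseteq> {E}" by (simp add: set_cond_pmf[OF ne])
      then have "cond_pmf Q {E} = return_pmf E" by (simp add: set_pmf_subset_singleton)
      then show ?thesis using True ky by (simp add: kap_def Ag_True)
    next
      case False
      define i where "i = Min (\<epsilon> - E)"
      have ne: "\<epsilon> - E \<noteq> {}" using \<epsilon>(2) False by (auto simp: Cset_def)
      have iin: "i \<in> \<epsilon> - E" unfolding i_def using ne finep by (intro Min_in) auto
      have kk: "kap E \<epsilon> = Some i" using False by (simp add: kap_def i_def)
      have step: "y \<in> Cset E \<and> kap E y = Some i \<longleftrightarrow> y \<in> Cset (insert i E)" if "y \<in> set_pmf p" for y
      proof -
        have "y \<subseteq> {1..m}" using that sp by auto
        then have fy: "finite y" using finite_subset by blast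
        show ?thesis unfolding i_def by (rule Cset_step[OF \<epsilon>(2) False finep fy])
      qed
      have "\<epsilon> \<subseteq> {1..m}" using \<epsilon>(1) sp by auto
      then have sub: "insert i E \<subseteq> {1..m}" using iin Suc.prems(1) by blast
      have nonemp: "set_pmf p \<inter> Cset (insert i E) \<noteq> {}" using step[OF \<epsilon>(1)] \<epsilon> kk by auto
      have card: "m + 1 \<le> card (insert i E) + k" using Suc.prems(3) iin finE by simp
      have lhs: "map_pmf fst (Ag (qc p) k (insert i E, False)) = cond_pmf p (Cset (insert i E))"
        by (rule Suc.IH[OF sub nonemp card])
      have ne2: "set_pmf p \<inter> Cset E \<inter> {y. kap E \<epsilon> = kap E y} \<noteq> {}" using \<epsilon> by auto
      have "cond_pmf Q {y. kap E \<epsilon> = kap E y} = cond_pmf p (Cset E \<inter> {y. kap E \<epsilon> = kap E y})"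
        unfolding Q_def by (rule cond_cond_pmf[OF ne2])
      also have "\<dots> = cond_pmf p (Cset (insert i E))"
      proof (rule cond_pmf_cong_supp)
        show "set_pmf p \<inter> (Cset E \<inter> {y. kap E \<epsilon> = kap E y}) \<noteq> {}" using ne2 by auto
        have "set_pmf p \<inter> (Cset E \<inter> {y. kap E \<epsilon> = kap E y})
            = {y \<in> set_pmf p. y \<in> Cset E \<and> kap E y = Some i}" using kk by auto
        also have "\<dots> = set_pmf p \<inter> Cset (insert i E)" using step by blast
        finally show "set_pmf p \<inter> (Cset E \<inter> {y. kap E \<epsilon> = kap E y}) = set_pmf p \<inter> Cset (insert i E)" .
      qed
      finally show ?thesis using lhs kk by simp
    qed
  qed
  also have "\<dots> = Q"
  proof -
    have sw: "\<And>y. {ya. kap E y = kap E ya} = {x. kap E x = kap E y}" by auto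
    show ?thesis by (rule bind_cond_pmf_cancel) (auto simp: sw)
  qed
  finally show ?case unfolding Q_def .
qed

lemma Cset_empty: "Cset {} = UNIV" by (auto simp: Cset_def)

lemma Ag_qc_final:
  assumes "set_pmf p \<subseteq> Pow {1..m}"
  shows "map_pmf fst (Ag (qc p) (m + 1) ({}, False)) = p"
proof -
  have "set_pmf p \<inter> Cset {} \<noteq> {}" using set_pmf_not_empty[of p] by (auto simp: Cset_empty)
  then show ?thesis using Ag_cond[OF assms, of "{}" "m+1"] by (simp add: Cset_empty cond_pmf_UNIV)
qed

lemma phi_eq:
  assumes "validq m (\<pi>s j w)"
  shows "phi \<pi>s j w = map_pmf fst (Ag (\<pi>s j w) (m + 1) ({}, False))"
proof -
  have "phi_val \<pi>s j w \<epsilon> = pmf (map_pmf fst (Ag (\<pi>s j w) (m + 1) ({}, False))) \<epsilon>" for \<epsilon>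
  proof -
    have ps: "{xs. distinct xs \<and> set xs = \<epsilon>} = permutations_of_set (\<epsilon> - {})"
      by (auto simp: permutations_of_set_def)
    show ?thesis
      by (subst Ag_pmf[OF assms]) (simp_all add: phi_val_def Wsum_def ps)
  qed
  then have "phi_val \<pi>s j w = pmf (map_pmf fst (Ag (\<pi>s j w) (m + 1) ({}, False)))" by (rule ext)
  then show ?thesis unfolding phi_def by (simp add: embed_pmf_pmf_eq)
qed

lemma val_eq:
  assumes "\<And>\<omega>. round_sel n m \<pi>' \<omega> = joint_action n \<pi> \<omega>"
  shows "val_M' n m Obs P R \<pi>' t s = val_M n Obs P R \<pi> t s"
  by (induction t arbitrary: s) (simp_all add: assms)


theorem mainTheorem3:
  fixes n m T :: nat
    and \<rho> :: "'s::finite pmf"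
    and Om :: "nat \<Rightarrow> 'o set"
    and Obs :: "'s \<Rightarrow> (nat \<Rightarrow> 'o) pmf"
    and P :: "'s \<Rightarrow> (nat \<Rightarrow> nat set) \<Rightarrow> 's pmf"
    and R :: "'s \<Rightarrow> (nat \<Rightarrow> nat set) \<Rightarrow> 's \<Rightarrow> real"
    and \<pi>s :: "nat \<Rightarrow> 'o \<Rightarrow> nat set \<Rightarrow> nat option pmf"
  assumes "n \<ge> 1" and "m \<ge> 1" and "T \<ge> 1"
    and "\<forall>j\<in>{1..n}. finite (Om j)"
    and "\<forall>s. set_pmf (Obs s) \<subseteq> Pi\<^sub>E {1..n} Om"
    and "valid_M'_policy n m \<pi>s"
    and "\<forall>\<pi>'. valid_M'_policy n m \<pi>' \<longrightarrow> V_M' n m Obs P R T \<pi>' \<rho> \<le> V_M' n m Obs P R T \<pi>s \<rho>"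
  shows "valid_M_policy n m (phi \<pi>s) \<and>
    (\<forall>\<pi>. valid_M_policy n m \<pi> \<longrightarrow> V_M n Obs P R T \<pi> \<rho> \<le> V_M n Obs P R T (phi \<pi>s) \<rho>)"
proof -
  have vq: "validq m (\<pi>s j w)" if "j \<in> {1..n}" for j w
    using assms(6) that unfolding valid_M'_policy_def validq_def by blast
  have rs: "round_sel n m \<pi>s \<omega> = joint_action n (phi \<pi>s) \<omega>" for \<omega>
    unfolding round_sel_eq joint_action_def by (rule Pi_pmf_cong) (auto simp: phi_eq[OF vq])
  have V1: "V_M' n m Obs P R T \<pi>s \<rho> = V_M n Obs P R T (phi \<pi>s) \<rho>"
  proof -
    have "val_M' n m Obs P R \<pi>s T = val_M n Obs P R (phi \<pi>s) T" by (rule ext) (rule val_eq[OF rs])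
    then show ?thesis unfolding V_M'_def V_M_def by simp
  qed
  have valid: "valid_M_policy n m (phi \<pi>s)"
    unfolding valid_M_policy_def
  proof (intro ballI allI)
    fix j w assume j: "j \<in> {1..n}"
    have "set_pmf (Ag (\<pi>s j w) (m + 1) ({}, False)) \<subseteq> {c. fst c \<subseteq> {1..m}}"
      by (rule Ag_support[OF vq[OF j]]) simp
    then show "set_pmf (phi \<pi>s j w) \<subseteq> Pow {1..m}" unfolding phi_eq[where m=m and \<pi>s=\<pi>s and j=j and w=w, OF vq[OF j]] by auto
  qed
  have "V_M n Obs P R T \<pi> \<rho> \<le> V_M n Obs P R T (phi \<pi>s) \<rho>" if v\<pi>: "valid_M_policy n m \<pi>" for \<pi>
  proof -
    define \<pi>' where "\<pi>' = (\<lambda>j w. qc (\<pi> j w))"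
    have sp: "set_pmf (\<pi> j w) \<subseteq> Pow {1..m}" if "j \<in> {1..n}" for j w
      using v\<pi> that unfolding valid_M_policy_def by blast
    have v': "valid_M'_policy n m \<pi>'"
      unfolding valid_M'_policy_def \<pi>'_def using qc_valid[OF sp] unfolding validq_def by blast
    have rs2: "round_sel n m \<pi>' \<omega> = joint_action n \<pi> \<omega>" for \<omega>
      unfolding round_sel_eq joint_action_def \<pi>'_def 
    proof (rule Pi_pmf_cong)
      fix x assume "x \<in> {1..n}"
      show "map_pmf fst (Ag (qc (\<pi> x (\<omega> x))) (m + 1) ({}, False)) = \<pi> x (\<omega> x)"
        by (rule Ag_qc_final[OF sp[OF \<open>x \<in> {1..n}\<close>]])
    qed simp_all
    have "V_M n Obs P R T \<pi> \<rho> = V_M' n m Obs P R T \<pi>' \<rho>"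
    proof -
      have "val_M' n m Obs P R \<pi>' T = val_M n Obs P R \<pi> T" by (rule ext) (rule val_eq[OF rs2])
      then show ?thesis unfolding V_M'_def V_M_def by simp
    qed
    also have "\<dots> \<le> V_M' n m Obs P R T \<pi>s \<rho>" using assms(7) v' by blast
    finally show ?thesis using V1 by simp
  qed
  then show ?thesis using valid by blast
qed

end
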